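(* Let $X$ be a topological space. The following are equivalent: (1) $X$ is dense-ultraconnected; (2) for every point $x\in X$, either $\overline{\{x\}}=X$, or the only open neighborhood of $x$ in the subspace $Y_x=\{x\}\cup(X\setminus\overline{\{x\}})$ is $Y_x$ itself; (3) for any two points $x,y\in X$, $x\in\overline{\{y\}}$ or $y\in\overline{\{x\}}$.
   Context: A space is ultraconnected if it contains no two disjoint non-empty closed subsets. A space $X$ is dense-ultraconnected if every dense subset of $X$ (with the subspace topology) is ultraconnected. *)

theory Defs
  imports "HOL-Analysis.Analysis"
begin

definition ultraconnected_space :: "'a topology \<Rightarrow> bool" where
  "ultraconnected_space X \<longleftrightarrow>
     \<not> (\<exists>A B. closedin X A \<and> closedin X B \<and> A \<noteq> {} \<and> B \<noteq> {} \<and> A \<inter> B = {})"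

definition dense_ultraconnected_space :: "'a topology \<Rightarrow> bool" where
  "dense_ultraconnected_space X \<longleftrightarrow>
     (\<forall>D. D \<subseteq> topspace X \<and> X closure_of D = topspace X
          \<longrightarrow> ultraconnected_space (subtopology X D))"

end

theory Submission
  imports Defs
begin

lemma cond3_imp_ultra:
  assumes H: "\<forall>x\<in>topspace X. \<forall>y\<in>topspace X. x \<in> X closure_of {y} \<or> y \<in> X closure_of {x}"
    and D: "D \<subseteq> topspace X"
  shows "ultraconnected_space (subtopology X D)"
  unfolding ultraconnected_space_def
proof
  assume "\<exists>A B. closedin (subtopology X D) A \<and> closedin (subtopology X D) B \<and> A \<noteq> {} \<and> B \<noteq> {} \<and> A \<inter> B = {}"
  then obtain A B where A: "closedin (subtopology X D) A" and B: "closedin (subtopology X D) B"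
    and ne: "A \<noteq> {}" "B \<noteq> {}" and dj: "A \<inter> B = {}" by blast
  obtain A' where A': "closedin X A'" "A = A' \<inter> D" using A by (auto simp: closedin_subtopology)
  obtain B' where B': "closedin X B'" "B = B' \<inter> D" using B by (auto simp: closedin_subtopology)
  obtain a b where ab: "a \<in> A" "b \<in> B" using ne by blast
  have at: "a \<in> topspace X" "b \<in> topspace X" using ab A' B' D by auto
  have cA: "X closure_of {a} \<subseteq> A'" using A' ab by (simp add: closure_of_minimal)
  have cB: "X closure_of {b} \<subseteq> B'" using B' ab by (simp add: closure_of_minimal)
  from H at have "a \<in> X closure_of {b} \<or> b \<in> X closure_of {a}" by simp
  then show False
  proof
    assume "a \<in> X closure_of {b}"
    then have "a \<in> B" using cB ab(1) A'(2) B'(2) by auto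
    then show False using ab(1) dj by auto
  next
    assume "b \<in> X closure_of {a}"
    then have "b \<in> A" using cA ab(2) A'(2) B'(2) by auto
    then show False using ab(2) dj by auto
  qed
qed

lemma du_imp_cond3:
  assumes du: "dense_ultraconnected_space X"
    and x: "x \<in> topspace X" and y: "y \<in> topspace X"
  shows "x \<in> X closure_of {y} \<or> y \<in> X closure_of {x}"
proof (rule ccontr)
  assume "\<not> ?thesis"
  then have nx: "x \<notin> X closure_of {y}" and ny: "y \<notin> X closure_of {x}" by auto
  define W where "W = topspace X - (X closure_of {x} \<union> X closure_of {y})"
  define D where "D = {x, y} \<union> W"
  have Dsub: "D \<subseteq> topspace X" using x y by (auto simp: D_def W_def)
  have "W \<subseteq> X closure_of W" by (rule closure_of_subset) (auto simp: W_def)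
  moreover have "D = {x} \<union> {y} \<union> W" by (auto simp: D_def)
  ultimately have "X closure_of D = topspace X"
    using closure_of_subset_topspace[of X D] closure_of_Un[of X "{x} \<union> {y}" W]
      closure_of_Un[of X "{x}" "{y}"]
    unfolding W_def by blast
  then have "ultraconnected_space (subtopology X D)" using du Dsub
    by (simp add: dense_ultraconnected_space_def)
  moreover have "closedin (subtopology X D) (X closure_of {x} \<inter> D)"
    by (auto simp: closedin_subtopology intro!: exI[of _ "X closure_of _"])
  moreover have "closedin (subtopology X D) (X closure_of {y} \<inter> D)"
    by (auto simp: closedin_subtopology intro!: exI[of _ "X closure_of _"])
  moreover have "x \<in> X closure_of {x} \<inter> D" "y \<in> X closure_of {y} \<inter> D"
    using x y closure_of_subset[of "{x}" X] closure_of_subset[of "{y}" X] by (auto simp: D_def)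
  moreover have "(X closure_of {x} \<inter> D) \<inter> (X closure_of {y} \<inter> D) = {}"
    using nx ny closure_of_subset[of "{x}" X] closure_of_subset[of "{y}" X] x y
    by (auto simp: D_def W_def)
  ultimately show False unfolding ultraconnected_space_def by blast
qed

lemma cond2_iff_cond3:
  assumes x: "x \<in> topspace X"
  shows "(X closure_of {x} = topspace X \<or>
                  (\<forall>U. openin (subtopology X ({x} \<union> (topspace X - X closure_of {x}))) U \<and> x \<in> U
                        \<longrightarrow> U = {x} \<union> (topspace X - X closure_of {x})))
         \<longleftrightarrow> (\<forall>y\<in>topspace X. x \<in> X closure_of {y} \<or> y \<in> X closure_of {x})"
    (is "?L \<longleftrightarrow> ?R")
proof
  assume L: ?L
  show ?R
  proof
    fix y assume y: "y \<in> topspace X"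
    show "x \<in> X closure_of {y} \<or> y \<in> X closure_of {x}"
    proof (cases "y \<in> X closure_of {x}")
      case True then show ?thesis by (rule disjI2)
    next
      case False
      then have nt: "X closure_of {x} \<noteq> topspace X" using y by auto
      with L have all: "\<forall>U. openin (subtopology X ({x} \<union> (topspace X - X closure_of {x}))) U \<and> x \<in> U
                        \<longrightarrow> U = {x} \<union> (topspace X - X closure_of {x})" by simp
      have "x \<in> X closure_of {y}"
        unfolding in_closure_of
      proof (intro conjI allI impI)
        show "x \<in> topspace X" by (rule x)
        fix T assume T: "x \<in> T \<and> openin X T"
        have o: "openin (subtopology X ({x} \<union> (topspace X - X closure_of {x}))) (T \<inter> ({x} \<union> (topspace X - X closure_of {x})))"
          using T by (intro openin_subtopology_Int) simp
        have xi: "x \<in> T \<inter> ({x} \<union> (topspace X - X closure_of {x}))" using T by simp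
        have eq: "T \<inter> ({x} \<union> (topspace X - X closure_of {x})) = {x} \<union> (topspace X - X closure_of {x})"
          using all o xi by (rule_tac mp[OF spec[OF all]]) (rule conjI)
        have "y \<in> {x} \<union> (topspace X - X closure_of {x})" using y False by simp
        then have "y \<in> T \<inter> ({x} \<union> (topspace X - X closure_of {x}))" by (subst eq)
        then have "y \<in> T" by (rule IntD1)
        then show "\<exists>z. z \<in> {y} \<and> z \<in> T" by simp
      qed
      then show ?thesis by (rule disjI1)
    qed
  qed
next
  assume R: ?R
  show ?L
  proof (rule disjI2, intro allI impI)
    fix U assume U: "openin (subtopology X ({x} \<union> (topspace X - X closure_of {x}))) U \<and> x \<in> U"
    then obtain T where T: "openin X T" "U = T \<inter> ({x} \<union> (topspace X - X closure_of {x}))"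
      using openin_subtopology by metis
    have xT: "x \<in> T" using T U by simp
    have "topspace X - X closure_of {x} \<subseteq> T"
    proof
      fix z assume z: "z \<in> topspace X - X closure_of {x}"
      then have "x \<in> X closure_of {z}" using R by auto
      then have "\<forall>S. x \<in> S \<and> openin X S \<longrightarrow> (\<exists>w. w \<in> {z} \<and> w \<in> S)"
        unfolding in_closure_of by (rule conjunct2)
      then show "z \<in> T" using T(1) xT by auto
    qed
    then show "U = {x} \<union> (topspace X - X closure_of {x})" using T(2) xT by auto
  qed
qed

theorem theorem5p8:
  fixes X :: "'a topology"
  shows "(dense_ultraconnected_space X
           \<longleftrightarrow> (\<forall>x\<in>topspace X.
                  X closure_of {x} = topspace X \<or>
                  (\<forall>U. openin (subtopology X ({x} \<union> (topspace X - X closure_of {x}))) U \<and> x \<in> U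
                        \<longrightarrow> U = {x} \<union> (topspace X - X closure_of {x}))))
       \<and> (dense_ultraconnected_space X
           \<longleftrightarrow> (\<forall>x\<in>topspace X. \<forall>y\<in>topspace X.
                  x \<in> X closure_of {y} \<or> y \<in> X closure_of {x}))"
proof -
  have E: "dense_ultraconnected_space X
           \<longleftrightarrow> (\<forall>x\<in>topspace X. \<forall>y\<in>topspace X.
                  x \<in> X closure_of {y} \<or> y \<in> X closure_of {x})"
  proof
    assume du: "dense_ultraconnected_space X"
    show "\<forall>x\<in>topspace X. \<forall>y\<in>topspace X. x \<in> X closure_of {y} \<or> y \<in> X closure_of {x}"
    proof (intro ballI)
      fix x y assume "x \<in> topspace X" "y \<in> topspace X"
      then show "x \<in> X closure_of {y} \<or> y \<in> X closure_of {x}" by (rule du_imp_cond3[OF du])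
    qed
  next
    assume H: "\<forall>x\<in>topspace X. \<forall>y\<in>topspace X. x \<in> X closure_of {y} \<or> y \<in> X closure_of {x}"
    show "dense_ultraconnected_space X"
      unfolding dense_ultraconnected_space_def
    proof (intro allI impI)
      fix D assume "D \<subseteq> topspace X \<and> X closure_of D = topspace X"
      then show "ultraconnected_space (subtopology X D)" by (intro cond3_imp_ultra[OF H]) (rule conjunct1)
    qed
  qed
  have F: "(\<forall>x\<in>topspace X.
                  X closure_of {x} = topspace X \<or>
                  (\<forall>U. openin (subtopology X ({x} \<union> (topspace X - X closure_of {x}))) U \<and> x \<in> U
                        \<longrightarrow> U = {x} \<union> (topspace X - X closure_of {x})))
        \<longleftrightarrow> (\<forall>x\<in>topspace X. \<forall>y\<in>topspace X.
                  x \<in> X closure_of {y} \<or> y \<in> X closure_of {x})"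
  proof (intro iffI ballI)
    fix x y assume A: "\<forall>x\<in>topspace X.
                  X closure_of {x} = topspace X \<or>
                  (\<forall>U. openin (subtopology X ({x} \<union> (topspace X - X closure_of {x}))) U \<and> x \<in> U
                        \<longrightarrow> U = {x} \<union> (topspace X - X closure_of {x}))" and x: "x \<in> topspace X" and y: "y \<in> topspace X"
    from A x have "X closure_of {x} = topspace X \<or>
                  (\<forall>U. openin (subtopology X ({x} \<union> (topspace X - X closure_of {x}))) U \<and> x \<in> U
                        \<longrightarrow> U = {x} \<union> (topspace X - X closure_of {x}))" by (rule bspec)
    then have "\<forall>y\<in>topspace X. x \<in> X closure_of {y} \<or> y \<in> X closure_of {x}"
      using cond2_iff_cond3[OF x] by (rule iffD1[rotated])
    then show "x \<in> X closure_of {y} \<or> y \<in> X closure_of {x}" using y by (rule bspec)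
  next
    fix x assume A: "\<forall>x\<in>topspace X. \<forall>y\<in>topspace X.
                  x \<in> X closure_of {y} \<or> y \<in> X closure_of {x}" and x: "x \<in> topspace X"
    from A x have "\<forall>y\<in>topspace X. x \<in> X closure_of {y} \<or> y \<in> X closure_of {x}" by (rule bspec)
    then show "X closure_of {x} = topspace X \<or>
                  (\<forall>U. openin (subtopology X ({x} \<union> (topspace X - X closure_of {x}))) U \<and> x \<in> U
                        \<longrightarrow> U = {x} \<union> (topspace X - X closure_of {x}))"
      using cond2_iff_cond3[OF x] by (rule iffD2[rotated])
  qed
  show ?thesis by (rule conjI[OF trans[OF E F[symmetric]] E])
qed

end
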